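(* Let $\varphi\in\mathcal{S}_e$ and set $h_e:=-\frac12\mathcal{F}^{-1}\varphi$ (which also lies in $\mathcal{S}_e$). Then for all $\mathbf{w}\in\mathbb{R}^d$, $$\varphi(\mathbf{w})-\varphi(\mathbf 0)=\int_{\mathbb{R}^d}h_e(\mathbf{x})\int_{\mathbb{R}}e^{-ik}\big(|\mathbf{w}\cdot\mathbf{x}|-|k|\big)^+dk\,d\mathbf{x}.$$
   Context: $\mathcal{S}(\mathbb{R}^d)$ is the Schwartz space; $\mathcal{S}_e$ is the space of even functions in $\mathcal{S}(\mathbb{R}^d)$. Inverse Fourier transform: $\mathcal{F}^{-1}f(\mathbf{x})=(2\pi)^{-d}\int_{\mathbb{R}^d}f(\mathbf{w})e^{i\mathbf{x}\cdot\mathbf{w}}d\mathbf{w}$. *)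

theory Defs
  imports "HOL-Analysis.Analysis"
begin

fun iter_pd :: "'a::euclidean_space list \<Rightarrow> ('a \<Rightarrow> complex) \<Rightarrow> 'a \<Rightarrow> complex" where
  "iter_pd [] f = f"
| "iter_pd (b # bs) f = (\<lambda>x. frechet_derivative (iter_pd bs f) (at x) b)"

definition schwartz :: "('a::euclidean_space \<Rightarrow> complex) \<Rightarrow> bool" where
  "schwartz f \<longleftrightarrow>
     (\<forall>bs. set bs \<subseteq> Basis \<longrightarrow> (\<forall>x. iter_pd bs f differentiable (at x))) \<and>
     (\<forall>bs (n::nat). set bs \<subseteq> Basis \<longrightarrow>
        (\<exists>C. \<forall>x. (1 + norm x) ^ n * norm (iter_pd bs f x) \<le> C))"

definition schwartz_even :: "('a::euclidean_space \<Rightarrow> complex) \<Rightarrow> bool" where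
  "schwartz_even f \<longleftrightarrow> schwartz f \<and> (\<forall>x. f (- x) = f x)"

definition inv_fourier :: "('a::euclidean_space \<Rightarrow> complex) \<Rightarrow> 'a \<Rightarrow> complex" where
  "inv_fourier f x = complex_of_real ((2 * pi) powi (- int DIM('a))) *
     integral\<^sup>L lborel (\<lambda>w. f w * cis (x \<bullet> w))"

end

theory Submission
  imports Defs "HOL-Probability.Probability"
begin


lemma lborel_prod_integral:
  fixes g :: "'a::euclidean_space \<Rightarrow> real \<Rightarrow> 'b::{real_normed_field,banach,second_countable_topology}"
  assumes int: "\<And>b. b \<in> Basis \<Longrightarrow> integrable lborel (g b)"
  shows "integrable lborel (\<lambda>x::'a. \<Prod>b\<in>Basis. g b (x \<bullet> b))"
    and "(\<integral>x. (\<Prod>b\<in>Basis. g b (x \<bullet> b)) \<partial>(lborel::'a measure)) = (\<Prod>b\<in>Basis. integral\<^sup>L lborel (g b))"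
proof -
  interpret product_sigma_finite "\<lambda>_::'a. lborel :: real measure" by unfold_locales
  have meas[measurable]: "(\<lambda>f. \<Sum>b\<in>Basis. f b *\<^sub>R b) \<in> (\<Pi>\<^sub>M b\<in>Basis. lborel) \<rightarrow>\<^sub>M (borel :: 'a measure)"
    by measurable
  have gm: "b \<in> Basis \<Longrightarrow> g b \<in> borel_measurable borel" for b
    using int[of b] borel_measurable_integrable[of lborel "g b"] by simp
  have mm: "(\<lambda>x::'a. \<Prod>b\<in>Basis. g b (x \<bullet> b)) \<in> borel_measurable borel"
    by (intro borel_measurable_prod measurable_compose[OF _ gm]) auto
  have eq: "(\<lambda>f. (\<Prod>b\<in>Basis. g b ((\<Sum>c\<in>Basis. f c *\<^sub>R c) \<bullet> b))) = (\<lambda>f. \<Prod>b\<in>Basis. g b (f b))"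
    by (intro ext prod.cong refl) (simp add: inner_sum_left inner_Basis if_distrib sum.delta cong: if_cong)
  have pint: "integrable (\<Pi>\<^sub>M b\<in>Basis. lborel) (\<lambda>f. \<Prod>b\<in>Basis. g b (f b))"
    by (rule product_integrable_prod) (auto intro: int)
  show "integrable lborel (\<lambda>x::'a. \<Prod>b\<in>Basis. g b (x \<bullet> b))"
    apply (subst lborel_eq)
    apply (subst integrable_distr_eq[OF meas mm])
    using pint by (simp add: eq)
  show "(\<integral>x. (\<Prod>b\<in>Basis. g b (x \<bullet> b)) \<partial>(lborel::'a measure)) = (\<Prod>b\<in>Basis. integral\<^sup>L lborel (g b))"
    apply (subst lborel_eq)
    apply (subst integral_distr[OF meas mm])
    using product_integral_prod[of Basis g] int by (simp add: eq)
qed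


lemma nn_half_invsq:
  "(\<integral>\<^sup>+x. ennreal (inverse (1 + x\<^sup>2)) * indicator {0..} x \<partial>lborel) = ennreal (pi/2)"
proof -
  have "(\<integral>\<^sup>+x. ennreal (inverse (1 + x\<^sup>2)) * indicator {0..} x \<partial>lborel) = pi/2 - arctan 0"
    by (rule nn_integral_FTC_atLeast[where F=arctan])
       (auto intro: DERIV_arctan tendsto_arctan_at_top)
  then show ?thesis by simp
qed

lemma integrable_invsq: "integrable lborel (\<lambda>x::real. inverse (1 + x\<^sup>2))"
proof -
  let ?f = "\<lambda>x::real. inverse (1 + x\<^sup>2)"
  have pos: "?f x > 0" for x by (simp add: add_pos_nonneg)
  have sym: "(\<integral>\<^sup>+x. ennreal (?f (-x)) * indicator {0..} (-x) \<partial>lborel) = (\<integral>\<^sup>+x. ennreal (?f x) * indicator {0..} x \<partial>lborel)"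
    using nn_integral_real_affine[where c="-1" and t=0 and f="\<lambda>x. ennreal (?f x) * indicator {0..} x"]
    by simp
  have "(\<integral>\<^sup>+x. ennreal (?f x) \<partial>lborel) \<le> (\<integral>\<^sup>+x. ennreal (?f x) * indicator {0..} x + ennreal (?f (-x)) * indicator {0..} (-x) \<partial>lborel)"
  proof (intro nn_integral_mono)
    fix x :: real
    show "ennreal (?f x) \<le> ennreal (?f x) * indicator {0..} x + ennreal (?f (-x)) * indicator {0..} (-x)"
    proof (cases "x \<ge> 0")
      case True then show ?thesis by (simp add: indicator_def)
    next
      case False then show ?thesis by (simp add: indicator_def)
    qed
  qed
  also have "\<dots> = (\<integral>\<^sup>+x. ennreal (?f x) * indicator {0..} x \<partial>lborel) + (\<integral>\<^sup>+x. ennreal (?f (-x)) * indicator {0..} (-x) \<partial>lborel)"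
    by (rule nn_integral_add) auto
  also have "\<dots> = ennreal (pi/2) + ennreal (pi/2)"
    unfolding sym nn_half_invsq ..
  also have "\<dots> < \<infinity>" by simp
  finally have "(\<integral>\<^sup>+x. ennreal (?f x) \<partial>lborel) < \<infinity>" .
  then show ?thesis
    using pos by (intro integrableI_nonneg) (auto intro: less_imp_le)
qed


lemma gauss1_integrable: "integrable lborel (\<lambda>t::real. complex_of_real (exp (-(t\<^sup>2)/2)) * cis (t * s))"
proof (rule Bochner_Integration.integrable_bound)
  show "integrable lborel (\<lambda>t::real. sqrt (2*pi) * (std_normal_density t * t^0))"
    using integrable_std_normal_moment[of 0] by simp
  show "(\<lambda>t::real. complex_of_real (exp (-(t\<^sup>2)/2)) * cis (t * s)) \<in> borel_measurable lborel"
    by (simp add: borel_measurable_continuous_onI continuous_intros)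
  show "AE t in lborel. norm (complex_of_real (exp (-(t\<^sup>2)/2)) * cis (t * s)) \<le> norm (sqrt (2*pi) * (std_normal_density t * t^0))"
    by (simp add: std_normal_density_def norm_mult)
qed

lemma gauss1_integral: "(\<integral>t. complex_of_real (exp (-(t\<^sup>2)/2)) * cis (t * s) \<partial>lborel) = complex_of_real (sqrt (2*pi) * exp (-(s\<^sup>2)/2))"
proof -
  have "complex_of_real (exp (-(s\<^sup>2)/2)) = char std_normal_distribution s"
    by (simp add: char_std_normal_distribution)
  also have "\<dots> = (\<integral>t. std_normal_density t *\<^sub>R iexp (s * t) \<partial>lborel)"
    unfolding char_def by (subst integral_density) (auto simp: normal_density_nonneg)
  also have "\<dots> = (\<integral>t. complex_of_real (1 / sqrt (2 * pi)) * (complex_of_real (exp (-(t\<^sup>2)/2)) * cis (t * s)) \<partial>lborel)"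
    by (rule Bochner_Integration.integral_cong) (simp_all add: std_normal_density_def scaleR_conv_of_real cis_conv_exp mult_ac)
  also have "\<dots> = complex_of_real (1 / sqrt (2 * pi)) * (\<integral>t. complex_of_real (exp (-(t\<^sup>2)/2)) * cis (t * s) \<partial>lborel)"
    by simp
  finally show ?thesis
    by (simp add: field_simps of_real_mult[symmetric] del: of_real_mult)
qed


lemma cis_sum: "finite I \<Longrightarrow> cis (\<Sum>i\<in>I. f i) = (\<Prod>i\<in>I. cis (f i))"
  by (simp add: cis_conv_exp of_real_sum sum_distrib_left exp_sum)

definition gau :: "'a::euclidean_space \<Rightarrow> real" where
  "gau x = exp (- (norm x)\<^sup>2 / 2)"

lemma gau_prod: "gau (x::'a::euclidean_space) = (\<Prod>b\<in>Basis. exp (-(x \<bullet> b)\<^sup>2/2))"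
proof -
  have "(norm x)\<^sup>2 = (\<Sum>b\<in>Basis. (x \<bullet> b)\<^sup>2)"
    unfolding power2_norm_eq_inner by (subst euclidean_inner) (simp add: power2_eq_square)
  then have "- (norm x)\<^sup>2 / 2 = (\<Sum>b\<in>Basis. -(x \<bullet> b)\<^sup>2/2)"
    by (simp add: sum_divide_distrib sum_negf)
  then show ?thesis unfolding gau_def by (simp add: exp_sum)
qed

lemma gau_cis_prod: "complex_of_real (gau (x::'a::euclidean_space)) * cis (x \<bullet> v) =
   (\<Prod>b\<in>Basis. complex_of_real (exp (-((x \<bullet> b)\<^sup>2)/2)) * cis ((x \<bullet> b) * (v \<bullet> b)))"
  by (simp add: gau_prod prod.distrib euclidean_inner[of x v] cis_sum)

lemma gaud_integrable: "integrable lborel (\<lambda>x::'a::euclidean_space. complex_of_real (gau x) * cis (x \<bullet> v))"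
  unfolding gau_cis_prod
  by (rule lborel_prod_integral(1)[where g="\<lambda>b t. complex_of_real (exp (-(t\<^sup>2)/2)) * cis (t * (v \<bullet> b))"])
     (rule gauss1_integrable)

lemma gaud_integral: "(\<integral>x. complex_of_real (gau x) * cis (x \<bullet> v) \<partial>lborel) =
    complex_of_real (sqrt (2*pi) ^ DIM('a) * gau (v::'a::euclidean_space))"
proof -
  have "(\<integral>x. complex_of_real (gau x) * cis (x \<bullet> v) \<partial>lborel) =
     (\<Prod>b\<in>(Basis::'a set). \<integral>t. complex_of_real (exp (-(t\<^sup>2)/2)) * cis (t * (v \<bullet> b)) \<partial>lborel)"
    unfolding gau_cis_prod
    by (rule lborel_prod_integral(2)[where g="\<lambda>b t. complex_of_real (exp (-(t\<^sup>2)/2)) * cis (t * (v \<bullet> b))"])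
       (rule gauss1_integrable)
  also have "\<dots> = (\<Prod>b\<in>(Basis::'a set). complex_of_real (sqrt (2*pi) * exp (-((v \<bullet> b)\<^sup>2)/2)))"
    by (simp only: gauss1_integral)
  also have "\<dots> = complex_of_real (sqrt (2*pi) ^ DIM('a) * gau v)"
    by (simp add: gau_prod prod.distrib)
  finally show ?thesis .
qed

lemma gau_integrable: "integrable lborel (gau :: 'a::euclidean_space \<Rightarrow> real)"
proof -
  have "integrable lborel (\<lambda>x::'a. Re (complex_of_real (gau x) * cis (x \<bullet> 0)))"
    using gaud_integrable[of 0] by (rule integrable_Re)
  then show ?thesis by simp
qed

lemma gau_integral: "(\<integral>x. gau (x::'a) \<partial>lborel) = sqrt (2*pi) ^ DIM('a::euclidean_space)"
proof -
  have "complex_of_real (\<integral>x. gau (x::'a) \<partial>lborel) = (\<integral>x. complex_of_real (gau x) * cis (x \<bullet> (0::'a)) \<partial>lborel)"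
    by simp
  also have "\<dots> = complex_of_real (sqrt (2*pi) ^ DIM('a))" unfolding gaud_integral by (simp add: gau_def)
  finally show ?thesis by (simp only: of_real_eq_iff)
qed

lemma gau_pos: "gau x > 0" by (simp add: gau_def)
lemma gau_le1: "gau x \<le> 1" by (simp add: gau_def)
lemma gau_cont: "continuous_on UNIV gau" unfolding gau_def by (intro continuous_intros) auto


definition bump :: "'a::euclidean_space \<Rightarrow> real" where
  "bump y = (\<Prod>b\<in>Basis. inverse (1 + (y \<bullet> b)\<^sup>2))"

lemma bump_pos: "bump y > 0"
  unfolding bump_def by (intro prod_pos) (simp add: add_pos_nonneg)

lemma bump_integrable: "integrable lborel (bump :: 'a::euclidean_space \<Rightarrow> real)"
  unfolding bump_def[abs_def]
  by (rule lborel_prod_integral(1)[where g="\<lambda>b t. inverse (1 + t\<^sup>2)"]) (rule integrable_invsq)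

lemma bump_ge: "inverse ((1 + norm (y::'a::euclidean_space)) ^ (2 * DIM('a))) \<le> bump y"
proof -
  have "(\<Prod>b\<in>(Basis::'a set). 1 + (y \<bullet> b)\<^sup>2) \<le> (\<Prod>b\<in>(Basis::'a set). (1 + norm y)\<^sup>2)"
  proof (rule prod_mono)
    fix b :: 'a assume b: "b \<in> Basis"
    have "\<bar>y \<bullet> b\<bar> \<le> norm y" using Basis_le_norm[OF b] .
    then have "(y \<bullet> b)\<^sup>2 \<le> (norm y)\<^sup>2"
      by (metis abs_ge_zero power2_abs power_mono)
    then show "0 \<le> 1 + (y \<bullet> b)\<^sup>2 \<and> 1 + (y \<bullet> b)\<^sup>2 \<le> (1 + norm y)\<^sup>2"
    proof -
      have "0 \<le> 2 * norm y" by simp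
      moreover have "(1 + norm y)\<^sup>2 = 1 + 2 * norm y + (norm y)\<^sup>2" by (simp add: power2_eq_square algebra_simps)
      ultimately have "1 + (y \<bullet> b)\<^sup>2 \<le> (1 + norm y)\<^sup>2"
        using \<open>(y \<bullet> b)\<^sup>2 \<le> (norm y)\<^sup>2\<close> by linarith
      then show ?thesis by (simp add: add_nonneg_nonneg)
    qed
  qed
  also have "\<dots> = (1 + norm y) ^ (2 * DIM('a))"
    by (subst power_mult) simp
  finally have le: "(\<Prod>b\<in>(Basis::'a set). 1 + (y \<bullet> b)\<^sup>2) \<le> (1 + norm y) ^ (2 * DIM('a))" .
  have pos: "0 < (\<Prod>b\<in>(Basis::'a set). 1 + (y \<bullet> b)\<^sup>2)"
    by (intro prod_pos) (simp add: add_pos_nonneg)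
  have "inverse ((1 + norm y) ^ (2 * DIM('a))) \<le> inverse (\<Prod>b\<in>(Basis::'a set). 1 + (y \<bullet> b)\<^sup>2)"
    using le pos by (intro le_imp_inverse_le) auto
  also have "\<dots> = bump y" unfolding bump_def by (simp add: prod_inversef[symmetric] o_def)
  finally show ?thesis .
qed

lemma decay_bump:
  fixes g :: "'a::euclidean_space \<Rightarrow> 'b::real_normed_vector"
  assumes "(1 + norm y) ^ (2 * DIM('a)) * norm (g y) \<le> C"
  shows "norm (g y) \<le> C * bump y"
proof -
  have p: "(1 + norm y) ^ (2 * DIM('a)) > 0" by (simp add: add_pos_nonneg)
  have "norm (g y) \<le> C * inverse ((1 + norm y) ^ (2 * DIM('a)))"
    using assms p by (simp add: field_simps)
  also have "\<dots> \<le> C * bump y"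
  proof (rule mult_left_mono[OF bump_ge])
    show "0 \<le> C" using assms p by (meson dual_order.trans mult_nonneg_nonneg norm_ge_zero less_imp_le)
  qed
  finally show ?thesis .
qed

lemma integrable_bump_bound:
  fixes g :: "'a::euclidean_space \<Rightarrow> complex"
  assumes "g \<in> borel_measurable borel" "\<And>y. norm (g y) \<le> C * bump y"
  shows "integrable lborel g"
proof (rule Bochner_Integration.integrable_bound[where f="\<lambda>y. C * bump y"])
  show "integrable lborel (\<lambda>y. C * bump y)" using bump_integrable by (rule integrable_mult_right)
  show "g \<in> borel_measurable lborel" using assms(1) by simp
  show "AE x in lborel. norm (g x) \<le> norm (C * bump x)"
    using assms(2) by (auto intro: order_trans[OF _ abs_ge_self])
qed


definition ift :: "('a::euclidean_space \<Rightarrow> complex) \<Rightarrow> 'a \<Rightarrow> complex" where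
  "ift f x = (\<integral>w. f w * cis (x \<bullet> w) \<partial>lborel)"

lemma cis_inner_meas[measurable]: "(\<lambda>y::'a::euclidean_space. cis (x \<bullet> y)) \<in> borel_measurable borel"
  by (intro borel_measurable_continuous_onI continuous_intros)

lemma shift_integral:
  fixes f :: "'a::euclidean_space \<Rightarrow> complex"
  assumes fm[measurable]: "f \<in> borel_measurable borel"
    and fi: "integrable lborel (\<lambda>y. f y * cis (x \<bullet> y))"
  shows "integrable lborel (\<lambda>y. f (c + y) * cis (x \<bullet> y))"
    and "(\<integral>y. f (c + y) * cis (x \<bullet> y) \<partial>lborel) = cis (- (x \<bullet> c)) * ift f x"
proof -
  let ?g = "\<lambda>y. f y * cis (x \<bullet> y) * cis (- (x \<bullet> c))"
  have gm: "?g \<in> borel_measurable borel" by measurable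
  have pm: "((+) c) \<in> lborel \<rightarrow>\<^sub>M borel" by simp
  have eq: "?g (c + y) = f (c + y) * cis (x \<bullet> y)" for y
  proof -
    have "cis (x \<bullet> c) * cis (- (x \<bullet> c)) = 1" by (simp add: cis_mult)
    then show ?thesis by (simp add: inner_add_right cis_mult[symmetric] mult.assoc)
  qed
  have gi: "integrable lborel ?g" using fi by (rule integrable_mult_left)
  have "integrable (distr lborel borel ((+) c)) ?g" using gi by (simp add: lborel_distr_plus)
  then show "integrable lborel (\<lambda>y. f (c + y) * cis (x \<bullet> y))"
    using integrable_distr_eq[OF pm gm] eq by simp
  have "(\<integral>y. ?g y \<partial>lborel) = (\<integral>y. ?g y \<partial>(distr lborel borel ((+) c)))" by (simp add: lborel_distr_plus)
  also have "\<dots> = (\<integral>y. ?g (c + y) \<partial>lborel)" by (rule integral_distr[OF pm gm])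
  finally have "(\<integral>y. f (c + y) * cis (x \<bullet> y) \<partial>lborel) = (\<integral>y. ?g y \<partial>lborel)" by (simp add: eq)
  also have "\<dots> = cis (- (x \<bullet> c)) * ift f x" unfolding ift_def by (simp add: mult.commute)
  finally show "(\<integral>y. f (c + y) * cis (x \<bullet> y) \<partial>lborel) = cis (- (x \<bullet> c)) * ift f x" .
qed

lemma cis_quot_lim:
  assumes "t \<longlonglongrightarrow> 0" "\<And>n. t n \<noteq> 0"
  shows "(\<lambda>n. (cis (- (t n * a)) - 1) / complex_of_real (t n)) \<longlonglongrightarrow> - \<i> * complex_of_real a"
proof -
  let ?E = "\<lambda>z::complex. exp (- \<i> * complex_of_real a * z)"
  have "DERIV ?E 0 :> - \<i> * complex_of_real a"
    by (auto intro!: derivative_eq_intros)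
  then have lim: "((\<lambda>h. (?E (0 + h) - ?E 0) / h) \<longlongrightarrow> - \<i> * complex_of_real a) (at 0)"
    by (simp add: DERIV_def)
  have fl: "filterlim (\<lambda>n. complex_of_real (t n)) (at 0) sequentially"
    unfolding filterlim_at using assms tendsto_of_real[OF assms(1), where 'a=complex] by auto
  have "(\<lambda>n. (?E (0 + complex_of_real (t n)) - ?E 0) / complex_of_real (t n)) \<longlonglongrightarrow> - \<i> * complex_of_real a"
    by (rule filterlim_compose[OF lim fl])
  moreover have "?E (0 + complex_of_real (t n)) = cis (- (t n * a))" for n
    by (simp add: cis_conv_exp mult_ac)
  ultimately show ?thesis by simp
qed

lemma deriv_dom:
  fixes f :: "'a::euclidean_space \<Rightarrow> complex" and e :: 'a
  assumes diff: "\<And>y. f differentiable (at y)"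
    and e: "norm e = 1"
    and fc: "continuous_on UNIV f"
    and bd: "\<And>y. (1 + norm y)^(2*DIM('a)) * norm (frechet_derivative f (at y) e) \<le> C2"
    and tt: "0 < tt" "tt \<le> 1"
  shows "norm (f (tt *\<^sub>R e + y) - f y) / tt \<le> C2 * 2^(2*DIM('a)) * bump y"
proof -
  let ?N = "2*DIM('a)"
  let ?D = "\<lambda>y. frechet_derivative f (at y) e"
  define g where "g s = f (y + s *\<^sub>R e)" for s
  define g' where "g' s = (\<lambda>h. frechet_derivative f (at (y + s *\<^sub>R e)) (h *\<^sub>R e))" for s
  have contg: "continuous_on {0..tt} g"
    unfolding g_def
    by (rule continuous_on_compose2[OF fc]) (auto intro!: continuous_intros)
  have derg: "(g has_derivative g' s) (at s)" for s
  proof -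
    have in1: "((\<lambda>s. y + s *\<^sub>R e) has_derivative (\<lambda>h. h *\<^sub>R e)) (at s)"
      by (auto intro!: derivative_eq_intros)
    have "(f has_derivative frechet_derivative f (at (y + s *\<^sub>R e))) (at (y + s *\<^sub>R e))"
      using diff frechet_derivative_works by blast
    from has_derivative_compose[OF in1 this] show ?thesis
      unfolding g_def g'_def by simp
  qed
  obtain s where s: "s \<in> {0<..<tt}" "norm (g tt - g 0) \<le> norm (g' s (tt - 0))"
    using mvt_general[OF tt(1) contg, of g'] derg by blast
  let ?z = "y + s *\<^sub>R e"
  have lin: "linear (frechet_derivative f (at ?z))"
    using diff frechet_derivative_works has_derivative_linear by blast
  have "g' s (tt - 0) = tt *\<^sub>R ?D ?z"
    unfolding g'_def using linear_cmul[OF lin] by simp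
  then have n1: "norm (f (tt *\<^sub>R e + y) - f y) \<le> tt * norm (?D ?z)"
    using s tt unfolding g_def by (simp add: add.commute)
  have C2: "0 \<le> C2" using bd[of 0] by (meson norm_ge_zero order_trans zero_le_mult_iff zero_le_power
         add_nonneg_nonneg zero_le_one)
  have yz: "1 + norm y \<le> 2 * (1 + norm ?z)"
  proof -
    have a: "norm y \<le> norm ?z + norm (s *\<^sub>R e)" using norm_triangle_ineq4[of ?z "s *\<^sub>R e"]
      by simp
    have b: "norm (s *\<^sub>R e) \<le> 1" using s tt e by simp
    have "1 + norm y \<le> 2 + 2 * norm ?z" using a b norm_ge_zero[of ?z] by linarith
    then show ?thesis by (simp add: algebra_simps)
  qed
  have "(1 + norm y)^?N * norm (?D ?z) \<le> (2 * (1 + norm ?z))^?N * norm (?D ?z)"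
    by (intro mult_right_mono power_mono yz) auto
  also have "\<dots> = 2^?N * ((1 + norm ?z)^?N * norm (?D ?z))" by (simp only: power_mult_distrib mult.assoc)
  also have "\<dots> \<le> 2^?N * C2" by (intro mult_left_mono bd) auto
  finally have "norm (?D ?z) \<le> (2^?N * C2) * bump y"
    by (rule decay_bump[where g="\<lambda>_. ?D ?z"])
  then have "tt * norm (?D ?z) \<le> tt * ((2^?N * C2) * bump y)"
    using tt by (intro mult_left_mono) auto
  with n1 have "norm (f (tt *\<^sub>R e + y) - f y) \<le> tt * ((2^?N * C2) * bump y)" by linarith
  with tt show ?thesis by (simp add: divide_le_eq mult_ac)
qed

lemma ibp:
  fixes f :: "'a::euclidean_space \<Rightarrow> complex" and e :: 'a
  assumes diff: "\<And>y. f differentiable (at y)"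
    and e: "norm e = 1"
    and fc: "continuous_on UNIV f"
    and bf: "\<And>y. norm (f y) \<le> C1 * bump y"
    and bd: "\<And>y. (1 + norm y)^(2*DIM('a)) * norm (frechet_derivative f (at y) e) \<le> C2"
    and Dc: "continuous_on UNIV (\<lambda>y. frechet_derivative f (at y) e)"
  shows "ift (\<lambda>y. frechet_derivative f (at y) e) x = - \<i> * complex_of_real (x \<bullet> e) * ift f x"
proof -
  let ?N = "2*DIM('a)"
  let ?D = "\<lambda>y. frechet_derivative f (at y) e"
  define t where "t n = 1 / real (Suc n)" for n
  have tpos: "t n > 0" "t n \<le> 1" for n by (auto simp: t_def)
  have t0: "t \<longlonglongrightarrow> 0" unfolding t_def using LIMSEQ_inverse_real_of_nat by (simp add: inverse_eq_divide)
  have fm[measurable]: "f \<in> borel_measurable borel" using fc by (rule borel_measurable_continuous_onI)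
  have Dm[measurable]: "?D \<in> borel_measurable borel" using Dc by (rule borel_measurable_continuous_onI)
  have fi: "integrable lborel (\<lambda>y. f y * cis (x \<bullet> y))"
    by (rule integrable_bump_bound[where C=C1]) (auto simp: norm_mult bf)
  define Q where "Q n y = (f (t n *\<^sub>R e + y) * cis (x \<bullet> y) - f y * cis (x \<bullet> y)) / complex_of_real (t n)" for n y
  have Qint: "(\<integral>y. Q n y \<partial>lborel) = (cis (- (t n * (x \<bullet> e))) - 1) / complex_of_real (t n) * ift f x" for n
  proof -
    have "(\<integral>y. Q n y \<partial>lborel) = ((\<integral>y. f (t n *\<^sub>R e + y) * cis (x \<bullet> y) \<partial>lborel) - (\<integral>y. f y * cis (x \<bullet> y) \<partial>lborel)) / complex_of_real (t n)"
      unfolding Q_def integral_divide_zero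
      by (subst Bochner_Integration.integral_diff[OF shift_integral(1)[OF fm fi] fi]) simp
    also have "\<dots> = (cis (- (t n * (x \<bullet> e))) - 1) / complex_of_real (t n) * ift f x"
      unfolding shift_integral(2)[OF fm fi] by (simp add: ift_def[symmetric] field_simps)
    finally show ?thesis .
  qed
  have lim1: "(\<lambda>n. \<integral>y. Q n y \<partial>lborel) \<longlonglongrightarrow> - \<i> * complex_of_real (x \<bullet> e) * ift f x"
    unfolding Qint
    by (intro tendsto_mult_right cis_quot_lim t0) (metis less_irrefl tpos(1))
  have lim2: "(\<lambda>n. \<integral>y. Q n y \<partial>lborel) \<longlonglongrightarrow> ift ?D x"
    unfolding ift_def
  proof (rule integral_dominated_convergence[where w="\<lambda>y. C2 * 2^?N * bump y"])
    show "(\<lambda>y. ?D y * cis (x \<bullet> y)) \<in> borel_measurable lborel" by simp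
    show "Q n \<in> borel_measurable lborel" for n unfolding Q_def by simp
    show "integrable lborel (\<lambda>y. C2 * 2^?N * bump y)" using bump_integrable by (rule integrable_mult_right)
    show "AE y in lborel. norm (Q n y) \<le> C2 * 2^?N * bump y" for n
    proof (rule AE_I2)
      fix y
      have "norm (Q n y) = norm (f (t n *\<^sub>R e + y) - f y) / t n"
        unfolding Q_def using tpos[of n]
        by (simp add: norm_divide norm_mult left_diff_distrib[symmetric])
      also have "\<dots> \<le> C2 * 2^?N * bump y"
        by (rule deriv_dom[OF diff e fc bd tpos])
      finally show "norm (Q n y) \<le> C2 * 2^?N * bump y" .
    qed
    show "AE y in lborel. (\<lambda>n. Q n y) \<longlonglongrightarrow> ?D y * cis (x \<bullet> y)"
    proof (rule AE_I2)
      fix y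
      let ?L = "frechet_derivative f (at y)"
      have hd: "(f has_derivative ?L) (at y)" using diff frechet_derivative_works by blast
      then have bl: "bounded_linear ?L" and
        lim: "((\<lambda>z. norm (f z - f y - ?L (z - y)) / norm (z - y)) \<longlongrightarrow> 0) (at y)"
        unfolding has_derivative_iff_norm by auto
      have e0: "e \<noteq> 0" using e by auto
      have zl: "filterlim (\<lambda>n. y + t n *\<^sub>R e) (at y) sequentially"
        unfolding filterlim_at
      proof
        show "\<forall>\<^sub>F n in sequentially. y + t n *\<^sub>R e \<in> UNIV \<and> y + t n *\<^sub>R e \<noteq> y"
          using e0 by (intro always_eventually allI) (metis add_cancel_left_right less_irrefl scaleR_eq_0_iff tpos(1) UNIV_I)
        have "(\<lambda>n. y + t n *\<^sub>R e) \<longlonglongrightarrow> y + 0 *\<^sub>R e"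
          by (intro tendsto_intros t0)
        then show "(\<lambda>n. y + t n *\<^sub>R e) \<longlonglongrightarrow> y" by simp
      qed
      have l2: "(\<lambda>n. norm (f (y + t n *\<^sub>R e) - f y - ?L (t n *\<^sub>R e)) / t n) \<longlonglongrightarrow> 0"
      proof -
        have tabs: "\<bar>t n\<bar> = t n" for n using tpos[of n] by simp
        show ?thesis using filterlim_compose[OF lim zl] e by (simp add: tabs)
      qed
      have eqn: "norm (f (y + t n *\<^sub>R e) - f y - ?L (t n *\<^sub>R e)) / t n =
          norm ((f (t n *\<^sub>R e + y) - f y) / complex_of_real (t n) - ?L e)" for n
      proof -
        have "?L (t n *\<^sub>R e) = t n *\<^sub>R ?L e" using linear_cmul[OF bounded_linear.linear[OF bl]] by simp
        moreover have "(f (t n *\<^sub>R e + y) - f y) / complex_of_real (t n) - ?L e =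
            (f (y + t n *\<^sub>R e) - f y - complex_of_real (t n) * ?L e) / complex_of_real (t n)"
          using tpos[of n] by (simp add: field_simps add.commute)
        ultimately show ?thesis using tpos[of n] by (simp add: norm_divide scaleR_conv_of_real)
      qed
      have "(\<lambda>n. (f (t n *\<^sub>R e + y) - f y) / complex_of_real (t n)) \<longlonglongrightarrow> ?L e"
        using l2 unfolding eqn by (simp add: tendsto_norm_zero_iff Lim_null[symmetric])
      then have "(\<lambda>n. (f (t n *\<^sub>R e + y) - f y) / complex_of_real (t n) * cis (x \<bullet> y)) \<longlonglongrightarrow> ?L e * cis (x \<bullet> y)"
        by (rule tendsto_mult_right)
      moreover have "Q n y = (f (t n *\<^sub>R e + y) - f y) / complex_of_real (t n) * cis (x \<bullet> y)" for n
        unfolding Q_def by (simp add: field_simps)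
      ultimately show "(\<lambda>n. Q n y) \<longlonglongrightarrow> ?D y * cis (x \<bullet> y)" by simp
    qed
  qed
  show ?thesis using LIMSEQ_unique[OF lim2 lim1] .
qed


lemma cis_pair_meas[measurable]: "(\<lambda>p::'a::euclidean_space\<times>'a. cis (fst p \<bullet> snd p)) \<in> borel_measurable (borel \<Otimes>\<^sub>M borel)"
  unfolding borel_prod by (intro borel_measurable_continuous_onI continuous_intros)

locale sch =
  fixes \<phi> :: "'a::euclidean_space \<Rightarrow> complex"
  assumes sch: "schwartz \<phi>"
begin

lemma sdiff: "set bs \<subseteq> Basis \<Longrightarrow> iter_pd bs \<phi> differentiable (at x)"
  using sch unfolding schwartz_def by blast

lemma scont: "set bs \<subseteq> Basis \<Longrightarrow> continuous_on UNIV (iter_pd bs \<phi>)"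
  by (intro continuous_at_imp_continuous_on ballI differentiable_imp_continuous_within sdiff)

lemma smeas[measurable]: "set bs \<subseteq> Basis \<Longrightarrow> iter_pd bs \<phi> \<in> borel_measurable borel"
  by (rule borel_measurable_continuous_onI[OF scont])

lemma sdecay: "set bs \<subseteq> Basis \<Longrightarrow> \<exists>C. \<forall>x. (1 + norm x) ^ n * norm (iter_pd bs \<phi> x) \<le> C"
  using sch unfolding schwartz_def by blast

lemma sbump: "set bs \<subseteq> Basis \<Longrightarrow> \<exists>C. \<forall>x. norm (iter_pd bs \<phi> x) \<le> C * bump x"
proof -
  assume "set bs \<subseteq> Basis"
  then obtain C where "\<forall>x. (1 + norm x) ^ (2*DIM('a)) * norm (iter_pd bs \<phi> x) \<le> C"
    using sdecay by blast
  then show ?thesis using decay_bump by blast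
qed

lemma sint: "set bs \<subseteq> Basis \<Longrightarrow> integrable lborel (\<lambda>y. iter_pd bs \<phi> y * cis (x \<bullet> y))"
proof -
  assume bs: "set bs \<subseteq> Basis"
  then obtain C where C: "\<And>y. norm (iter_pd bs \<phi> y) \<le> C * bump y" using sbump by blast
  show ?thesis
    by (rule integrable_bump_bound[where C=C]) (use bs C in \<open>auto simp: norm_mult\<close>)
qed

lemma sint_norm: "set bs \<subseteq> Basis \<Longrightarrow> integrable lborel (\<lambda>y. norm (iter_pd bs \<phi> y))"
  using sint[of bs 0] by (simp add: integrable_norm)

lemma ift_iter: "set bs \<subseteq> Basis \<Longrightarrow>
    ift (iter_pd bs \<phi>) x = prod_list (map (\<lambda>b. - \<i> * complex_of_real (x \<bullet> b)) bs) * ift \<phi> x"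
proof (induction bs)
  case Nil then show ?case by simp
next
  case (Cons b bs)
  then have bs: "set bs \<subseteq> Basis" and b: "b \<in> Basis" by auto
  obtain C1 where C1: "\<And>y. norm (iter_pd bs \<phi> y) \<le> C1 * bump y" using sbump[OF bs] by blast
  obtain C2 where C2: "\<And>y. (1 + norm y) ^ (2*DIM('a)) * norm (iter_pd (b#bs) \<phi> y) \<le> C2"
    using sdecay[OF Cons.prems] by blast
  have "ift (iter_pd (b#bs) \<phi>) x = - \<i> * complex_of_real (x \<bullet> b) * ift (iter_pd bs \<phi>) x"
    unfolding iter_pd.simps
  proof (rule ibp[OF sdiff[OF bs] norm_Basis[OF b] scont[OF bs] C1])
    show "(1 + norm y) ^ (2*DIM('a)) * norm (frechet_derivative (iter_pd bs \<phi>) (at y) b) \<le> C2" for y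
      using C2[of y] by simp
    show "continuous_on UNIV (\<lambda>y. frechet_derivative (iter_pd bs \<phi>) (at y) b)"
      using scont[OF Cons.prems] by simp
  qed
  then show ?case using Cons.IH[OF bs] by (simp add: mult_ac)
qed

lemma ift_meas[measurable]: "ift \<phi> \<in> borel_measurable borel"
proof -
  have [measurable]: "\<phi> \<in> borel_measurable borel" using smeas[of "[]"] by simp
  have "(\<lambda>(x, w). \<phi> w * cis (x \<bullet> w)) \<in> borel_measurable (borel \<Otimes>\<^sub>M lborel)"
    by measurable
  then show ?thesis unfolding ift_def[abs_def]
    using lborel.borel_measurable_lebesgue_integral by blast
qed

lemma ift_iter_bound: "set bs \<subseteq> Basis \<Longrightarrow>
    norm (prod_list (map (\<lambda>b. - \<i> * complex_of_real (x \<bullet> b)) bs)) * norm (ift \<phi> x) \<le> (\<integral>y. norm (iter_pd bs \<phi> y) \<partial>lborel)"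
proof -
  assume bs: "set bs \<subseteq> Basis"
  have "norm (prod_list (map (\<lambda>b. - \<i> * complex_of_real (x \<bullet> b)) bs)) * norm (ift \<phi> x) = norm (ift (iter_pd bs \<phi>) x)"
    by (simp add: ift_iter[OF bs] norm_mult)
  also have "\<dots> \<le> (\<integral>y. norm (iter_pd bs \<phi> y * cis (x \<bullet> y)) \<partial>lborel)"
    unfolding ift_def by (rule integral_norm_bound)
  also have "\<dots> = (\<integral>y. norm (iter_pd bs \<phi> y) \<partial>lborel)" by (simp add: norm_mult)
  finally show ?thesis .
qed

end

definition lst :: "'a set \<Rightarrow> 'a list" where "lst S = (SOME l. set l = S \<and> distinct l)"

lemma lst: "finite S \<Longrightarrow> set (lst S) = S \<and> distinct (lst S)"
  unfolding lst_def by (rule someI_ex) (rule finite_distinct_list)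

context sch begin

lemma ift_bump: "\<exists>K. \<forall>x. norm (ift \<phi> x) \<le> K * bump x"
proof -
  let ?d = "DIM('a)"
  define KK where "KK = (\<Sum>S\<in>Pow (Basis::'a set). \<integral>y. norm (iter_pd (lst S @ lst S) \<phi> y) \<partial>lborel)"
  have "norm (ift \<phi> x) \<le> (2^?d * KK) * bump x" for x
  proof -
    define S where "S = {b\<in>(Basis::'a set). 1 < \<bar>x \<bullet> b\<bar>}"
    have SB: "S \<subseteq> Basis" and fS: "finite S" unfolding S_def by (auto intro: finite_subset)
    have l: "set (lst S) = S" "distinct (lst S)" using lst[OF fS] by auto
    let ?g = "\<lambda>b. - \<i> * complex_of_real (x \<bullet> b)"
    let ?P = "\<Prod>b\<in>S. (x \<bullet> b)\<^sup>2"
    have bs: "set (lst S @ lst S) \<subseteq> Basis" using l SB by auto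
    have "prod_list (map ?g (lst S @ lst S)) = (prod ?g S)^2"
      using prod.distinct_set_conv_list[OF l(2), of ?g] l by (simp add: power2_eq_square)
    then have nP: "norm (prod_list (map ?g (lst S @ lst S))) = ?P"
      by (simp add: norm_power prod_norm[symmetric] norm_mult power2_abs prod_power_distrib[symmetric])
         (simp add: abs_prod[symmetric])
    have K: "?P * norm (ift \<phi> x) \<le> KK"
    proof -
      have "?P * norm (ift \<phi> x) \<le> (\<integral>y. norm (iter_pd (lst S @ lst S) \<phi> y) \<partial>lborel)"
        using ift_iter_bound[OF bs, of x] nP by simp
      also have "\<dots> \<le> KK" unfolding KK_def
        by (rule member_le_sum[where f="\<lambda>S. \<integral>y. norm (iter_pd (lst S @ lst S) \<phi> y) \<partial>lborel"])
           (use SB in auto)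
      finally show ?thesis .
    qed
    have KK0: "0 \<le> KK" unfolding KK_def by (intro sum_nonneg integral_nonneg_AE) auto
    have ib: "inverse (bump x) \<le> 2^?d * ?P"
    proof -
      have "inverse (bump x) = (\<Prod>b\<in>(Basis::'a set). 1 + (x \<bullet> b)\<^sup>2)"
        unfolding bump_def by (simp add: prod_inversef[symmetric] o_def)
      also have "\<dots> \<le> (\<Prod>b\<in>(Basis::'a set). if b \<in> S then 2 * (x \<bullet> b)\<^sup>2 else 2)"
      proof (rule prod_mono)
        fix b :: 'a assume b: "b \<in> Basis"
        show "0 \<le> 1 + (x \<bullet> b)\<^sup>2 \<and> 1 + (x \<bullet> b)\<^sup>2 \<le> (if b \<in> S then 2 * (x \<bullet> b)\<^sup>2 else 2)"
        proof (cases "b \<in> S")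
          case True
          then have "1 < \<bar>x \<bullet> b\<bar>" unfolding S_def by auto
          then have "1 \<le> (x \<bullet> b)\<^sup>2"
            by (metis abs_ge_zero less_imp_le one_le_power power2_abs)
          then show ?thesis using True by simp
        next
          case False
          then have "\<bar>x \<bullet> b\<bar> \<le> 1" unfolding S_def using b by auto
          then have "(x \<bullet> b)\<^sup>2 \<le> 1"
            by (metis abs_ge_zero power2_abs power_le_one)
          then show ?thesis using False by simp
        qed
      qed
      also have "\<dots> = (\<Prod>b\<in>S. 2 * (x \<bullet> b)\<^sup>2) * (\<Prod>b\<in>(Basis::'a set) - S. 2)"
        using SB by (subst prod.If_cases) (auto simp: Int_absorb1 Diff_eq[symmetric])
      also have "\<dots> = 2^card S * ?P * 2^(?d - card S)"
        using SB fS by (simp add: prod.distrib card_Diff_subset)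
      also have "\<dots> = 2^?d * ?P"
      proof -
        have "card S \<le> ?d" using SB by (simp add: card_mono)
        then have "(2::real)^card S * 2^(?d - card S) = 2^?d" by (simp add: power_add[symmetric])
        then show ?thesis by (simp add: mult_ac)
      qed
      finally show ?thesis .
    qed
    have bp: "0 < bump x" by (rule bump_pos)
    have "norm (ift \<phi> x) = bump x * (inverse (bump x) * norm (ift \<phi> x))"
      using bp by simp
    also have "\<dots> \<le> bump x * (2^?d * ?P * norm (ift \<phi> x))"
      using ib bp by (intro mult_left_mono mult_right_mono) auto
    also have "\<dots> \<le> bump x * (2^?d * KK)"
      using K bp by (simp add: mult.assoc)
    finally show ?thesis by (simp add: mult_ac)
  qed
  then show ?thesis by blast
qed

lemma ift_integrable: "integrable lborel (\<lambda>x. ift \<phi> x * c x)"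
  if "c \<in> borel_measurable borel" "\<And>x. norm (c x) \<le> 1"
proof -
  obtain K where K: "\<And>x. norm (ift \<phi> x) \<le> K * bump x" using ift_bump by blast
  show ?thesis
  proof (rule integrable_bump_bound[where C=K])
    show "(\<lambda>x. ift \<phi> x * c x) \<in> borel_measurable borel" using that(1) by measurable
    show "norm (ift \<phi> x * c x) \<le> K * bump x" for x
      using K[of x] that(2)[of x] by (simp add: norm_mult) (meson mult_left_le norm_ge_zero order_trans)
  qed
qed

end


lemma lborel_affine_integral:
  fixes g :: "'a::euclidean_space \<Rightarrow> complex"
  assumes c: "c \<noteq> 0" and g[measurable]: "g \<in> borel_measurable borel"
  shows "(\<integral>x. g x \<partial>lborel) = complex_of_real (\<bar>c\<bar>^DIM('a)) * (\<integral>x. g (t + c *\<^sub>R x) \<partial>lborel)"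
proof -
  have m: "(\<lambda>x. t + c *\<^sub>R x) \<in> lborel \<rightarrow>\<^sub>M borel" by simp
  have "(\<integral>x. g x \<partial>lborel) = (\<integral>x. g x \<partial>density (distr lborel borel (\<lambda>x. t + c *\<^sub>R x)) (\<lambda>_. \<bar>c\<bar>^DIM('a)))"
    using lborel_affine[OF c, of t] by simp
  also have "\<dots> = (\<integral>x. \<bar>c\<bar>^DIM('a) *\<^sub>R g x \<partial>distr lborel borel (\<lambda>x. t + c *\<^sub>R x))"
    by (rule integral_density) auto
  also have "\<dots> = (\<integral>x. \<bar>c\<bar>^DIM('a) *\<^sub>R g (t + c *\<^sub>R x) \<partial>lborel)"
    by (rule integral_distr[OF m]) simp
  also have "\<dots> = complex_of_real (\<bar>c\<bar>^DIM('a)) * (\<integral>x. g (t + c *\<^sub>R x) \<partial>lborel)"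
    by (simp add: scaleR_conv_of_real)
  finally show ?thesis .
qed

lemma gau_scaled_integral:
  assumes e: "0 < \<epsilon>"
  shows "(\<integral>x. complex_of_real (gau (\<epsilon> *\<^sub>R x)) * cis (x \<bullet> v) \<partial>lborel) =
    complex_of_real ((1/\<epsilon>)^DIM('a) * sqrt (2*pi)^DIM('a) * gau ((1/\<epsilon>) *\<^sub>R (v::'a::euclidean_space)))"
proof -
  have gm: "(\<lambda>x::'a. complex_of_real (gau (\<epsilon> *\<^sub>R x)) * cis (x \<bullet> v)) \<in> borel_measurable borel"
    unfolding gau_def by (intro borel_measurable_continuous_onI continuous_intros) auto
  have "(\<integral>x. complex_of_real (gau (\<epsilon> *\<^sub>R x)) * cis (x \<bullet> v) \<partial>lborel) =
      complex_of_real (\<bar>1/\<epsilon>\<bar>^DIM('a)) * (\<integral>x. complex_of_real (gau (\<epsilon> *\<^sub>R (0 + (1/\<epsilon>) *\<^sub>R x))) * cis ((0 + (1/\<epsilon>) *\<^sub>R x) \<bullet> v) \<partial>lborel)"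
    by (rule lborel_affine_integral[OF _ gm]) (use e in simp)
  also have "(\<lambda>x. complex_of_real (gau (\<epsilon> *\<^sub>R (0 + (1/\<epsilon>) *\<^sub>R x))) * cis ((0 + (1/\<epsilon>) *\<^sub>R x) \<bullet> v)) =
      (\<lambda>x. complex_of_real (gau x) * cis (x \<bullet> ((1/\<epsilon>) *\<^sub>R v)))"
    using e by (auto simp: fun_eq_iff)
  also have "(\<integral>x. complex_of_real (gau x) * cis (x \<bullet> ((1/\<epsilon>) *\<^sub>R v)) \<partial>lborel) =
      complex_of_real (sqrt (2*pi) ^ DIM('a) * gau ((1/\<epsilon>) *\<^sub>R v))"
    by (rule gaud_integral)
  finally show ?thesis using e by (simp add: mult_ac)
qed

lemma integrable_pair_prod:
  fixes a :: "'a::euclidean_space \<Rightarrow> real" and b :: "'b::euclidean_space \<Rightarrow> real"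
  assumes a: "integrable lborel a" and b: "integrable lborel b"
  shows "integrable (lborel \<Otimes>\<^sub>M lborel) (\<lambda>(x,y). a x * b y)"
proof -
  interpret P: pair_sigma_finite "lborel::'a measure" "lborel::'b measure" ..
  have am[measurable]: "a \<in> borel_measurable borel" using a by (simp add: borel_measurable_integrable[of lborel a, simplified])
  have bm[measurable]: "b \<in> borel_measurable borel" using b by (simp add: borel_measurable_integrable[of lborel b, simplified])
  have "(\<integral>\<^sup>+p. ennreal (norm ((\<lambda>(x,y). a x * b y) p)) \<partial>(lborel \<Otimes>\<^sub>M lborel)) =
      (\<integral>\<^sup>+x. \<integral>\<^sup>+y. ennreal (norm (a x)) * ennreal (norm (b y)) \<partial>lborel \<partial>lborel)"
  proof -
    have "(\<integral>\<^sup>+p. ennreal (norm ((\<lambda>(x,y). a x * b y) p)) \<partial>(lborel \<Otimes>\<^sub>M lborel)) =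
      (\<integral>\<^sup>+x. \<integral>\<^sup>+y. ennreal (norm ((\<lambda>(x,y). a x * b y) (x,y))) \<partial>lborel \<partial>lborel)"
      by (rule lborel.nn_integral_fst[symmetric]) measurable
    then show ?thesis by (simp add: norm_mult abs_mult ennreal_mult)
  qed
  also have "\<dots> = (\<integral>\<^sup>+x. ennreal (norm (a x)) * (\<integral>\<^sup>+y. ennreal (norm (b y)) \<partial>lborel) \<partial>lborel)"
    by (simp add: nn_integral_cmult)
  also have "\<dots> = (\<integral>\<^sup>+x. ennreal (norm (a x)) \<partial>lborel) * (\<integral>\<^sup>+y. ennreal (norm (b y)) \<partial>lborel)"
    by (simp add: nn_integral_multc)
  also have "\<dots> < \<infinity>"
    using a b unfolding integrable_iff_bounded by (simp add: ennreal_mult_less_top)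
  finally show ?thesis
    unfolding integrable_iff_bounded by auto
qed

context sch begin

lemma phi_meas[measurable]: "\<phi> \<in> borel_measurable borel" using smeas[of "[]"] by simp
lemma phi_cont: "continuous_on UNIV \<phi>" using scont[of "[]"] by simp
lemma phi_bounded: "\<exists>M. \<forall>x. norm (\<phi> x) \<le> M"
  using sdecay[of "[]" 0] by simp
lemma phi_integrable: "integrable lborel (\<lambda>y. norm (\<phi> y))"
  using sint_norm[of "[]"] by simp

lemma step2:
  assumes e: "0 < \<epsilon>"
  shows "(\<integral>x. ift \<phi> x * cis (- (w \<bullet> x)) * complex_of_real (gau (\<epsilon> *\<^sub>R x)) \<partial>lborel) =
     complex_of_real (sqrt (2*pi) ^ DIM('a)) * (\<integral>z. \<phi> (w + \<epsilon> *\<^sub>R z) * complex_of_real (gau z) \<partial>lborel)"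
proof -
  define F where "F x y = \<phi> y * cis (x \<bullet> y) * (cis (- (w \<bullet> x)) * complex_of_real (gau (\<epsilon> *\<^sub>R x)))" for x y :: 'a
  have gm[measurable]: "(\<lambda>x::'a. gau (\<epsilon> *\<^sub>R x)) \<in> borel_measurable borel"
    unfolding gau_def by (intro borel_measurable_continuous_onI continuous_intros) auto
  have gim[measurable]: "(\<lambda>x::'a. complex_of_real (gau (\<epsilon> *\<^sub>R x))) \<in> borel_measurable borel" by measurable
  have m1[measurable]: "(\<lambda>x::'a. cis (- (w \<bullet> x))) \<in> borel_measurable borel"
    by (intro borel_measurable_continuous_onI continuous_intros)
  have gint: "integrable lborel (\<lambda>x::'a. gau (\<epsilon> *\<^sub>R x))"
  proof -
    have "integrable lborel (\<lambda>x::'a. gau (0 + \<epsilon> *\<^sub>R x))"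
    proof (rule integrable_distr[where M'=borel and T="\<lambda>x. 0 + \<epsilon> *\<^sub>R x"])
      show "(\<lambda>x::'a. 0 + \<epsilon> *\<^sub>R x) \<in> lborel \<rightarrow>\<^sub>M borel" by simp
      have "integrable (density (distr lborel borel (\<lambda>x::'a. 0 + \<epsilon> *\<^sub>R x)) (\<lambda>_. \<bar>\<epsilon>\<bar>^DIM('a))) gau"
        using gau_integrable lborel_affine[of \<epsilon> "0::'a"] e by simp
      then have "integrable (distr lborel borel (\<lambda>x::'a. 0 + \<epsilon> *\<^sub>R x)) (\<lambda>x. \<bar>\<epsilon>\<bar>^DIM('a) *\<^sub>R gau x)"
        by (subst (asm) integrable_density) (auto simp: gau_cont borel_measurable_continuous_onI)
      then have "integrable (distr lborel borel (\<lambda>x::'a. 0 + \<epsilon> *\<^sub>R x)) (\<lambda>x. (1 / \<bar>\<epsilon>\<bar>^DIM('a)) *\<^sub>R (\<bar>\<epsilon>\<bar>^DIM('a) *\<^sub>R gau x))"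
        by (rule integrable_scaleR_right)
      then show "integrable (distr lborel borel (\<lambda>x::'a. 0 + \<epsilon> *\<^sub>R x)) gau"
        using e by simp
    qed
    then show ?thesis by simp
  qed
  have Fint: "integrable (lborel \<Otimes>\<^sub>M lborel) (\<lambda>(x,y). F x y)"
  proof (rule Bochner_Integration.integrable_bound[OF integrable_pair_prod[OF gint phi_integrable]])
    show "(\<lambda>(x,y). F x y) \<in> borel_measurable (lborel \<Otimes>\<^sub>M lborel)"
      unfolding F_def by measurable
    show "AE p in lborel \<Otimes>\<^sub>M lborel. norm ((\<lambda>(x,y). F x y) p) \<le> norm ((\<lambda>(x,y). gau (\<epsilon> *\<^sub>R x) * norm (\<phi> y)) p)"
    proof (intro AE_I2)
      fix p :: "'a \<times> 'a"
      obtain x y where p: "p = (x, y)" by force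
      have "norm (F x y) = gau (\<epsilon> *\<^sub>R x) * norm (\<phi> y)"
        unfolding F_def by (simp add: norm_mult gau_pos abs_of_pos)
      also have "\<dots> \<le> norm (gau (\<epsilon> *\<^sub>R x) * norm (\<phi> y))" unfolding real_norm_def by (rule abs_ge_self)
      finally show "norm ((\<lambda>(x,y). F x y) p) \<le> norm ((\<lambda>(x,y). gau (\<epsilon> *\<^sub>R x) * norm (\<phi> y)) p)"
        unfolding p by simp
    qed
  qed
  have "(\<integral>x. ift \<phi> x * cis (- (w \<bullet> x)) * complex_of_real (gau (\<epsilon> *\<^sub>R x)) \<partial>lborel) = (\<integral>x. \<integral>y. F x y \<partial>lborel \<partial>lborel)"
  proof (intro Bochner_Integration.integral_cong refl)
    fix x
    have "(\<integral>y. F x y \<partial>lborel) = ift \<phi> x * (cis (- (w \<bullet> x)) * complex_of_real (gau (\<epsilon> *\<^sub>R x)))"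
      unfolding F_def ift_def by (rule integral_mult_left_zero)
    then show "ift \<phi> x * cis (- (w \<bullet> x)) * complex_of_real (gau (\<epsilon> *\<^sub>R x)) = (\<integral>y. F x y \<partial>lborel)"
      by (simp only: mult.assoc)
  qed
  also have "\<dots> = (\<integral>y. \<integral>x. F x y \<partial>lborel \<partial>lborel)"
    by (rule lborel_pair.Fubini_integral[symmetric, OF Fint])
  also have "\<dots> = (\<integral>y. \<phi> y * complex_of_real ((1/\<epsilon>)^DIM('a) * sqrt (2*pi)^DIM('a) * gau ((1/\<epsilon>) *\<^sub>R (y - w))) \<partial>lborel)"
  proof (intro Bochner_Integration.integral_cong refl)
    fix y
    have "(\<integral>x. F x y \<partial>lborel) = (\<integral>x. \<phi> y * (complex_of_real (gau (\<epsilon> *\<^sub>R x)) * cis (x \<bullet> (y - w))) \<partial>lborel)"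
    proof (intro Bochner_Integration.integral_cong refl)
      fix x
      have c: "cis (x \<bullet> y) * cis (- (w \<bullet> x)) = cis (x \<bullet> (y - w))"
        by (simp add: cis_mult inner_diff_right inner_commute)
      show "F x y = \<phi> y * (complex_of_real (gau (\<epsilon> *\<^sub>R x)) * cis (x \<bullet> (y - w)))"
        unfolding F_def c[symmetric] by (simp only: mult_ac)
    qed
    also have "\<dots> = \<phi> y * (\<integral>x. complex_of_real (gau (\<epsilon> *\<^sub>R x)) * cis (x \<bullet> (y - w)) \<partial>lborel)"
      by simp
    also have "\<dots> = \<phi> y * complex_of_real ((1/\<epsilon>)^DIM('a) * sqrt (2*pi)^DIM('a) * gau ((1/\<epsilon>) *\<^sub>R (y - w)))"
      by (simp only: gau_scaled_integral[OF e])
    finally show "(\<integral>x. F x y \<partial>lborel) = \<phi> y * complex_of_real ((1/\<epsilon>)^DIM('a) * sqrt (2*pi)^DIM('a) * gau ((1/\<epsilon>) *\<^sub>R (y - w)))" .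
  qed
  also have "\<dots> = complex_of_real (\<bar>\<epsilon>\<bar>^DIM('a)) * (\<integral>z. \<phi> (w + \<epsilon> *\<^sub>R z) * complex_of_real ((1/\<epsilon>)^DIM('a) * sqrt (2*pi)^DIM('a) * gau ((1/\<epsilon>) *\<^sub>R ((w + \<epsilon> *\<^sub>R z) - w))) \<partial>lborel)"
  proof (rule lborel_affine_integral)
    show "\<epsilon> \<noteq> 0" using e by simp
    show "(\<lambda>y. \<phi> y * complex_of_real ((1/\<epsilon>)^DIM('a) * sqrt (2*pi)^DIM('a) * gau ((1/\<epsilon>) *\<^sub>R (y - w)))) \<in> borel_measurable borel"
      using gau_cont unfolding gau_def by measurable
  qed
  also have "\<dots> = complex_of_real (sqrt (2*pi) ^ DIM('a)) * (\<integral>z. \<phi> (w + \<epsilon> *\<^sub>R z) * complex_of_real (gau z) \<partial>lborel)"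
  proof -
    let ?K = "(1/\<epsilon>)^DIM('a) * sqrt (2*pi)^DIM('a)"
    have i1: "(\<integral>z. \<phi> (w + \<epsilon> *\<^sub>R z) * complex_of_real (?K * gau ((1/\<epsilon>) *\<^sub>R ((w + \<epsilon> *\<^sub>R z) - w))) \<partial>lborel) =
       (\<integral>z. complex_of_real ?K * (\<phi> (w + \<epsilon> *\<^sub>R z) * complex_of_real (gau z)) \<partial>lborel)"
      by (intro Bochner_Integration.integral_cong refl) (use e in \<open>simp add: mult_ac\<close>)
    have i2: "(\<integral>z. complex_of_real ?K * (\<phi> (w + \<epsilon> *\<^sub>R z) * complex_of_real (gau z)) \<partial>lborel) =
       complex_of_real ?K * (\<integral>z. \<phi> (w + \<epsilon> *\<^sub>R z) * complex_of_real (gau z) \<partial>lborel)"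
      by (rule integral_mult_right_zero)
    have k: "\<bar>\<epsilon>\<bar>^DIM('a) * (1/\<epsilon>)^DIM('a) * sqrt (2*pi)^DIM('a) = sqrt (2*pi)^DIM('a)"
      using e by (simp add: power_divide)
    show ?thesis unfolding i1 i2 by (simp only: mult.assoc[symmetric] of_real_mult[symmetric] k)
  qed
  finally show ?thesis .
qed

lemma inversion:
  "(\<integral>x. ift \<phi> x * cis (- (w \<bullet> x)) \<partial>lborel) = complex_of_real ((2*pi)^DIM('a)) * \<phi> w"
proof -
  define \<epsilon> where "\<epsilon> n = 1 / real (Suc n)" for n
  have epos: "\<epsilon> n > 0" for n by (simp add: \<epsilon>_def)
  have e0: "\<epsilon> \<longlonglongrightarrow> 0" unfolding \<epsilon>_def using LIMSEQ_inverse_real_of_nat by (simp add: inverse_eq_divide)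
  have cm[measurable]: "(\<lambda>x::'a. cis (- (w \<bullet> x))) \<in> borel_measurable borel"
    by (intro borel_measurable_continuous_onI continuous_intros)
  have gcont: "isCont gau x" for x :: 'a
    unfolding gau_def by (intro continuous_intros) simp
  have gm[measurable]: "(gau :: 'a \<Rightarrow> real) \<in> borel_measurable borel"
    using gau_cont by (rule borel_measurable_continuous_onI)
  have lim1: "(\<lambda>n. \<integral>x. ift \<phi> x * cis (- (w \<bullet> x)) * complex_of_real (gau (\<epsilon> n *\<^sub>R x)) \<partial>lborel)
      \<longlonglongrightarrow> (\<integral>x. ift \<phi> x * cis (- (w \<bullet> x)) \<partial>lborel)"
  proof (rule integral_dominated_convergence[where w="\<lambda>x. norm (ift \<phi> x)"])
    show "(\<lambda>x. ift \<phi> x * cis (- (w \<bullet> x))) \<in> borel_measurable lborel" by simp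
    show "(\<lambda>x. ift \<phi> x * cis (- (w \<bullet> x)) * complex_of_real (gau (\<epsilon> n *\<^sub>R x))) \<in> borel_measurable lborel" for n
      by measurable
    show "integrable lborel (\<lambda>x. norm (ift \<phi> x))"
      using ift_integrable[of "\<lambda>_. 1"] by (simp add: integrable_norm)
    show "AE x in lborel. (\<lambda>n. ift \<phi> x * cis (- (w \<bullet> x)) * complex_of_real (gau (\<epsilon> n *\<^sub>R x))) \<longlonglongrightarrow> ift \<phi> x * cis (- (w \<bullet> x))"
    proof (rule AE_I2)
      fix x :: 'a
      have "(\<lambda>n. \<epsilon> n *\<^sub>R x) \<longlonglongrightarrow> 0 *\<^sub>R x" by (intro tendsto_intros e0)
      then have l0: "(\<lambda>n. \<epsilon> n *\<^sub>R x) \<longlonglongrightarrow> 0" by simp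
      have "(\<lambda>n. gau (\<epsilon> n *\<^sub>R x)) \<longlonglongrightarrow> gau (0::'a)"
        by (rule isCont_tendsto_compose[OF gcont l0])
      then have "(\<lambda>n. complex_of_real (gau (\<epsilon> n *\<^sub>R x))) \<longlonglongrightarrow> 1"
        using tendsto_of_real by (fastforce simp: gau_def)
      from tendsto_mult_left[OF this, of "ift \<phi> x * cis (- (w \<bullet> x))"]
      show "(\<lambda>n. ift \<phi> x * cis (- (w \<bullet> x)) * complex_of_real (gau (\<epsilon> n *\<^sub>R x))) \<longlonglongrightarrow> ift \<phi> x * cis (- (w \<bullet> x))"
        by simp
    qed
    show "AE x in lborel. norm (ift \<phi> x * cis (- (w \<bullet> x)) * complex_of_real (gau (\<epsilon> n *\<^sub>R x))) \<le> norm (ift \<phi> x)" for n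
    proof (rule AE_I2)
      fix x :: 'a
      have "gau (\<epsilon> n *\<^sub>R x) \<le> 1" "0 \<le> gau (\<epsilon> n *\<^sub>R x)" using gau_le1 gau_pos less_imp_le by auto
      then show "norm (ift \<phi> x * cis (- (w \<bullet> x)) * complex_of_real (gau (\<epsilon> n *\<^sub>R x))) \<le> norm (ift \<phi> x)"
        by (simp add: norm_mult mult_left_le)
    qed
  qed
  obtain M where M: "\<And>x. norm (\<phi> x) \<le> M" using phi_bounded by blast
  have lim3: "(\<lambda>n. \<integral>z. \<phi> (w + \<epsilon> n *\<^sub>R z) * complex_of_real (gau z) \<partial>lborel)
      \<longlonglongrightarrow> (\<integral>z. \<phi> w * complex_of_real (gau (z::'a)) \<partial>lborel)"
  proof (rule integral_dominated_convergence[where w="\<lambda>z. M * gau z"])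
    show "(\<lambda>z::'a. \<phi> w * complex_of_real (gau z)) \<in> borel_measurable lborel" by measurable
    show "(\<lambda>z::'a. \<phi> (w + \<epsilon> n *\<^sub>R z) * complex_of_real (gau z)) \<in> borel_measurable lborel" for n
      by measurable
    show "integrable lborel (\<lambda>z::'a. M * gau z)" using gau_integrable by (rule integrable_mult_right)
    show "AE z in lborel. (\<lambda>n. \<phi> (w + \<epsilon> n *\<^sub>R z) * complex_of_real (gau z)) \<longlonglongrightarrow> \<phi> w * complex_of_real (gau z)"
    proof (rule AE_I2)
      fix z :: 'a
      have "(\<lambda>n. w + \<epsilon> n *\<^sub>R z) \<longlonglongrightarrow> w + 0 *\<^sub>R z" by (intro tendsto_intros e0)
      then have lw: "(\<lambda>n. w + \<epsilon> n *\<^sub>R z) \<longlonglongrightarrow> w" by simp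
      have ic: "isCont \<phi> w" using phi_cont by (simp add: continuous_on_eq_continuous_at)
      have "(\<lambda>n. \<phi> (w + \<epsilon> n *\<^sub>R z)) \<longlonglongrightarrow> \<phi> w"
        by (rule isCont_tendsto_compose[OF ic lw])
      then show "(\<lambda>n. \<phi> (w + \<epsilon> n *\<^sub>R z) * complex_of_real (gau z)) \<longlonglongrightarrow> \<phi> w * complex_of_real (gau z)"
        by (rule tendsto_mult_right)
    qed
    show "AE z in lborel. norm (\<phi> (w + \<epsilon> n *\<^sub>R z) * complex_of_real (gau z)) \<le> M * gau z" for n
    proof (rule AE_I2)
      fix z :: 'a
      have "0 \<le> gau z" using gau_pos less_imp_le by blast
      then have "norm (\<phi> (w + \<epsilon> n *\<^sub>R z)) * gau z \<le> M * gau z" by (rule mult_right_mono[OF M])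
      then show "norm (\<phi> (w + \<epsilon> n *\<^sub>R z) * complex_of_real (gau z)) \<le> M * gau z"
        using \<open>0 \<le> gau z\<close> by (simp add: norm_mult)
    qed
  qed
  have lim2: "(\<lambda>n. \<integral>x. ift \<phi> x * cis (- (w \<bullet> x)) * complex_of_real (gau (\<epsilon> n *\<^sub>R x)) \<partial>lborel)
      \<longlonglongrightarrow> complex_of_real (sqrt (2*pi) ^ DIM('a)) * (\<integral>z. \<phi> w * complex_of_real (gau (z::'a)) \<partial>lborel)"
    unfolding step2[OF epos] by (rule tendsto_mult_left[OF lim3])
  have e2: "(\<integral>z. \<phi> w * complex_of_real (gau (z::'a)) \<partial>lborel) = \<phi> w * complex_of_real (sqrt (2*pi) ^ DIM('a))"
    unfolding integral_mult_right_zero integral_complex_of_real gau_integral ..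
  have "(\<integral>x. ift \<phi> x * cis (- (w \<bullet> x)) \<partial>lborel) = complex_of_real (sqrt (2*pi) ^ DIM('a)) * (\<phi> w * complex_of_real (sqrt (2*pi) ^ DIM('a)))"
    using LIMSEQ_unique[OF lim1 lim2] unfolding e2 .
  also have "\<dots> = complex_of_real ((2*pi)^DIM('a)) * \<phi> w"
  proof -
    have "sqrt (2*pi) * sqrt (2*pi) = 2*pi" by simp
    then have s: "sqrt (2*pi) ^ DIM('a) * sqrt (2*pi) ^ DIM('a) = (2*pi)^DIM('a)"
      by (metis power_mult_distrib)
    have "complex_of_real (sqrt (2*pi) ^ DIM('a)) * (\<phi> w * complex_of_real (sqrt (2*pi) ^ DIM('a))) =
       complex_of_real (sqrt (2*pi) ^ DIM('a) * sqrt (2*pi) ^ DIM('a)) * \<phi> w"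
      by (simp only: of_real_mult mult_ac)
    then show ?thesis unfolding s .
  qed
  finally show ?thesis .
qed

end


lemma inner_int:
  fixes a :: real assumes a: "0 \<le> a"
  shows "(\<integral>k. cis (- k) * complex_of_real (max 0 (a - \<bar>k\<bar>)) \<partial>lborel) = 2 - 2 * complex_of_real (cos a)"
proof -
  let ?f = "\<lambda>k. cis (- k) * complex_of_real (max 0 (a - \<bar>k\<bar>))"
  define F where "F k = cis (-k) * (\<i> * complex_of_real (a - k) - 1)" for k
  define G where "G k = cis (-k) * (\<i> * complex_of_real (a + k) + 1)" for k
  have dF: "(F has_vector_derivative (cis (-k) * complex_of_real (a - k))) (at k within S)" for k S
    unfolding has_vector_derivative_def F_def
    apply (rule has_derivative_eq_rhs)
     apply (rule derivative_intros | rule has_derivative_cis)+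
    apply (simp add: fun_eq_iff algebra_simps scaleR_conv_of_real)
    done
  have dG: "(G has_vector_derivative (cis (-k) * complex_of_real (a + k))) (at k within S)" for k S
    unfolding has_vector_derivative_def G_def
    apply (rule has_derivative_eq_rhs)
     apply (rule derivative_intros | rule has_derivative_cis)+
    apply (simp add: fun_eq_iff algebra_simps scaleR_conv_of_real)
    done
  have i1: "((\<lambda>k. cis (-k) * complex_of_real (a - k)) has_integral (F a - F 0)) {0..a}"
    by (rule fundamental_theorem_of_calculus[OF a]) (use dF in blast)
  have i2: "((\<lambda>k. cis (-k) * complex_of_real (a + k)) has_integral (G 0 - G (-a))) {-a..0}"
    using a by (intro fundamental_theorem_of_calculus) (use dG in auto)
  have j1: "(?f has_integral (F a - F 0)) {0..a}"
    by (rule has_integral_eq[OF _ i1]) (auto simp: max_def)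
  have j2: "(?f has_integral (G 0 - G (-a))) {-a..0}"
    by (rule has_integral_eq[OF _ i2]) (auto simp: max_def)
  have j: "(?f has_integral ((G 0 - G (-a)) + (F a - F 0))) {-a..a}"
    using a by (intro has_integral_combine[OF _ _ j2 j1]) auto
  have val: "(G 0 - G (-a)) + (F a - F 0) = 2 - 2 * complex_of_real (cos a)"
    unfolding F_def G_def by (simp add: cis.code complex_eq_iff algebra_simps)
  have jU: "(?f has_integral (2 - 2 * complex_of_real (cos a))) UNIV"
    by (rule has_integral_on_superset[OF j[unfolded val]]) (auto simp: max_def)
  have fc: "continuous_on {-a..a} ?f" by (intro continuous_intros)
  have "integrable lborel (\<lambda>x. indicator {-a..a} x *\<^sub>R ?f x)"
    by (rule borel_integrable_compact[OF compact_Icc fc])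
  moreover have "(\<lambda>x. indicator {-a..a} x *\<^sub>R ?f x) = ?f"
    by (auto simp: fun_eq_iff indicator_def max_def)
  ultimately have "integrable lborel ?f" by simp
  from has_integral_integral_lborel[OF this] jU show ?thesis
    by (rule has_integral_unique)
qed

theorem mainTheorem6:
  fixes \<phi> :: "'a::euclidean_space \<Rightarrow> complex" and w :: 'a
  assumes "schwartz_even \<phi>"
  defines "h_e \<equiv> (\<lambda>x. - (1/2) * inv_fourier \<phi> x)"
  shows "\<phi> w - \<phi> 0 =
    integral\<^sup>L lborel (\<lambda>x. h_e x *
       integral\<^sup>L lborel (\<lambda>k::real. cis (- k) *
          complex_of_real (max 0 (\<bar>w \<bullet> x\<bar> - \<bar>k\<bar>))))"
proof -
  have sch: "schwartz \<phi>" and ev: "\<And>x. \<phi> (- x) = \<phi> x"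
    using assms(1) unfolding schwartz_even_def by auto
  interpret sch \<phi> by (rule sch.intro[OF sch])
  define c where "c = (2 * pi) powi (- int DIM('a))"
  have c1: "c * (2*pi)^DIM('a) = 1"
    unfolding c_def power_int_minus power_int_of_nat by (simp add: field_simps)
  have invf: "inv_fourier \<phi> x = complex_of_real c * ift \<phi> x" for x
    unfolding inv_fourier_def ift_def c_def ..
  let ?A = "\<lambda>v x. ift \<phi> x * cis (- (v \<bullet> x))"
  have Aint: "integrable lborel (?A v)" for v
  proof (rule ift_integrable)
    show "(\<lambda>x. cis (- (v \<bullet> x))) \<in> borel_measurable borel"
      by (intro borel_measurable_continuous_onI continuous_intros)
  qed simp
  have pw: "h_e x * (\<integral>k. cis (- k) * complex_of_real (max 0 (\<bar>w \<bullet> x\<bar> - \<bar>k\<bar>)) \<partial>lborel) =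
      complex_of_real c * ((1/2) * ?A w x + (1/2) * ?A (-w) x - ?A 0 x)" for x
  proof -
    let ?t = "w \<bullet> x"
    have cc: "cis (- ?t) + cis ?t = 2 * complex_of_real (cos ?t)"
      by (simp add: complex_eq_iff)
    have "h_e x * (\<integral>k. cis (- k) * complex_of_real (max 0 (\<bar>w \<bullet> x\<bar> - \<bar>k\<bar>)) \<partial>lborel) =
        complex_of_real c * ift \<phi> x * (complex_of_real (cos ?t) - 1)"
      unfolding inner_int[OF abs_ge_zero] h_e_def invf by (simp add: algebra_simps)
    also have "\<dots> = complex_of_real c * ift \<phi> x * ((cis (- ?t) + cis ?t) / 2 - 1)"
      unfolding cc by simp
    also have "\<dots> = complex_of_real c * ((1/2) * ?A w x + (1/2) * ?A (-w) x - ?A 0 x)"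
      by (simp add: algebra_simps)
    finally show ?thesis .
  qed
  have "(\<integral>x. h_e x * (\<integral>k. cis (- k) * complex_of_real (max 0 (\<bar>w \<bullet> x\<bar> - \<bar>k\<bar>)) \<partial>lborel) \<partial>lborel) =
      (\<integral>x. complex_of_real c * ((1/2) * ?A w x + (1/2) * ?A (-w) x - ?A 0 x) \<partial>lborel)"
    unfolding pw ..
  also have "\<dots> = complex_of_real c * ((1/2) * (\<integral>x. ?A w x \<partial>lborel) + (1/2) * (\<integral>x. ?A (-w) x \<partial>lborel) - (\<integral>x. ?A 0 x \<partial>lborel))"
    using Aint[of w] Aint[of "-w"] Aint[of 0]
    by (simp add: Bochner_Integration.integral_diff Bochner_Integration.integral_add)
  also have "\<dots> = complex_of_real c * complex_of_real ((2*pi)^DIM('a)) * ((1/2) * \<phi> w + (1/2) * \<phi> (-w) - \<phi> 0)"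
    unfolding inversion by (simp add: algebra_simps)
  also have "\<dots> = \<phi> w - \<phi> 0"
  proof -
    have "complex_of_real c * complex_of_real ((2*pi)^DIM('a)) = 1"
      unfolding of_real_mult[symmetric] c1 by simp
    then show ?thesis using ev[of w] by simp
  qed
  finally show ?thesis by simp
qed


end
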